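(* For every $n\geq1$, $m_1(\mathbb{R}^n,\Vert\cdot\Vert_\infty)=\frac{1}{2^n}$, where $\Vert x\Vert_\infty=\max_{1\leq i\leq n}|x_i|$.
   Context: A set $A$ avoids distance $1$ if $\Vert x-y\Vert\neq1$ for all $x,y\in A$. The density of a measurable $A\subset\mathbb{R}^n$ is $\delta(A)=\limsup_{R\to\infty}\operatorname{Vol}(A\cap[-R,R]^n)/\operatorname{Vol}([-R,R]^n)$, and $m_1(\mathbb{R}^n,\Vert\cdot\Vert)$ is the supremum of $\delta(A)$ over measurable $A$ avoiding distance $1$. *)

theory Defs
  imports "HOL-Analysis.Analysis"
begin

definition sup_norm :: "real^'n \<Rightarrow> real" where
  "sup_norm x = Max (range (\<lambda>i. \<bar>x $ i\<bar>))"

definition avoids_dist1 :: "(real^'n \<Rightarrow> real) \<Rightarrow> (real^'n) set \<Rightarrow> bool" where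
  "avoids_dist1 N A \<longleftrightarrow> (\<forall>x\<in>A. \<forall>y\<in>A. N (x - y) \<noteq> 1)"

definition cube :: "real \<Rightarrow> (real^'n) set" where
  "cube R = {x. \<forall>i. \<bar>x $ i\<bar> \<le> R}"

definition density :: "(real^'n) set \<Rightarrow> ereal" where
  "density A = Limsup at_top (\<lambda>R::real. ereal (measure lebesgue (A \<inter> cube R) / measure lebesgue (cube R :: (real^'n) set)))"

definition m1 :: "(real^'n \<Rightarrow> real) \<Rightarrow> ereal" where
  "m1 N = Sup {density A | A. A \<in> sets lebesgue \<and> avoids_dist1 N A}"

end

theory Submission
  imports Defs
begin
lemma cube_cbox: "cube R = cbox (- (\<chi> i. R)) ((\<chi> i. R) :: real^'n)"
  unfolding cube_def by (auto simp: mem_box_cart abs_le_iff minus_le_iff)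
lemma cube_lmeas: "(cube R :: (real^'n) set) \<in> lmeasurable"
  unfolding cube_cbox by simp
lemma cube_measure: "R \<ge> 0 \<Longrightarrow> measure lebesgue (cube R :: (real^'n) set) = (2*R) ^ CARD('n)"
proof -
  assume R: "R \<ge> 0"
  have ne: "cbox (- (\<chi> i. R)) ((\<chi> i. R) :: real^'n) \<noteq> {}"
    using R by (auto simp: interval_ne_empty_cart)
  have "measure lebesgue (cube R :: (real^'n) set) = measure lborel (cbox (- (\<chi> i. R)) ((\<chi> i. R) :: real^'n))"
    unfolding cube_cbox by (simp add: measure_completion)
  also have "\<dots> = (2*R) ^ CARD('n)" using ne by (simp add: content_cbox_cart del: measure_lborel_cbox_eq)
  finally show ?thesis .
qed

definition vtx :: "'n set \<Rightarrow> real^'n" where "vtx S = (\<chi> i. if i \<in> S then 1 else 0)"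

lemma card_sets: "card (UNIV :: 'n::finite set set) = 2 ^ CARD('n)"
  using card_Pow[of "UNIV :: 'n set"] by (simp add: Pow_UNIV)

lemma sup_norm_le: "sup_norm x \<le> c \<longleftrightarrow> (\<forall>i. \<bar>x $ i\<bar> \<le> c)"
  unfolding sup_norm_def by (subst Max_le_iff) auto

lemma sup_norm_attained: "\<exists>i. sup_norm x = \<bar>x $ i\<bar>"
proof -
  have "Max (range (\<lambda>i. \<bar>x $ i\<bar>)) \<in> range (\<lambda>i. \<bar>x $ i\<bar>)"
    by (rule Max_in) auto
  then show ?thesis unfolding sup_norm_def by (metis imageE)
qed

lemma sup_norm_vtx: assumes "S \<noteq> T" shows "sup_norm (vtx S - vtx T) = 1"
proof -
  obtain i where "i \<in> S \<and> i \<notin> T \<or> i \<in> T \<and> i \<notin> S" using assms by blast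
  then have i: "\<bar>(vtx S - vtx T) $ i\<bar> = 1" by (auto simp: vtx_def)
  have "\<forall>j. \<bar>(vtx S - vtx T) $ j\<bar> \<le> 1" by (auto simp: vtx_def)
  then have "sup_norm (vtx S - vtx T) \<le> 1" by (simp add: sup_norm_le)
  moreover have "sup_norm (vtx S - vtx T) \<ge> 1"
    unfolding sup_norm_def using i by (intro Max_ge_iff[THEN iffD2]) (auto intro: exI[of _ i])
  ultimately show ?thesis by simp
qed


lemma upper_key:
  fixes A :: "(real^'n) set"
  assumes Am: "A \<in> sets lebesgue" and Av: "avoids_dist1 sup_norm A" and R: "R \<ge> 1"
  shows "2 ^ CARD('n) * measure lebesgue (A \<inter> cube (R - 1)) \<le> (2*R) ^ CARD('n)"
proof -
  define B where "B S = cube R \<inter> (\<lambda>x. x - vtx S) ` A" for S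
  have Bm: "B S \<in> sets lebesgue" for S
  proof -
    have "(\<lambda>x. x - vtx S) ` A = (\<lambda>x. - vtx S + x) ` A" by (auto simp: algebra_simps)
    then have "(\<lambda>x. x - vtx S) ` A \<in> sets lebesgue" using lebesgue_sets_translation[OF Am] by metis
    then show ?thesis unfolding B_def using cube_lmeas by blast
  qed
  have Bf: "B S \<in> fmeasurable lebesgue" for S
    by (rule fmeasurableI2[OF cube_lmeas _ Bm]) (auto simp: B_def)
  have disj: "disjoint_family_on B UNIV"
  unfolding disjoint_family_on_def
  proof (intro ballI impI, rule ccontr)
    fix S T assume "S \<in> UNIV" "T \<in> UNIV" and ST: "S \<noteq> T" and ne: "B S \<inter> B T \<noteq> {}"
    then obtain x where xS: "x \<in> B S" and xT: "x \<in> B T" by blast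
    have a: "x + vtx U \<in> A" if "x \<in> B U" for U
      using that unfolding B_def by auto
    note a = a[OF xS] a[OF xT]
    have "sup_norm ((x + vtx S) - (x + vtx T)) = 1" using sup_norm_vtx[OF ST] by simp
    with a Av show False unfolding avoids_dist1_def by blast
  qed
  have "(\<Sum>S\<in>UNIV. measure lebesgue (B S)) = measure lebesgue (\<Union>S. B S)"
    by (rule measure_finite_Union[symmetric]) (use Bm disj Bf in \<open>auto simp: fmeasurable_def less_top simp del: emeasure_completion\<close>)
  also have "\<dots> \<le> measure lebesgue (cube R :: (real^'n) set)"
  proof (rule measure_mono_fmeasurable)
    show "(\<Union>S. B S) \<in> sets lebesgue" using Bm by (intro sets.countable_UN') auto
  qed (use cube_lmeas in \<open>auto simp: B_def\<close>)
  also have "\<dots> = (2*R) ^ CARD('n)" using R by (simp add: cube_measure)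
  finally have sum: "(\<Sum>S\<in>UNIV. measure lebesgue (B S)) \<le> (2*R) ^ CARD('n)" .
  have low: "measure lebesgue (A \<inter> cube (R - 1)) \<le> measure lebesgue (B S)" for S
  proof -
    have "measure lebesgue (A \<inter> cube (R - 1)) = measure lebesgue ((\<lambda>x. x - vtx S) ` (A \<inter> cube (R - 1)))"
      by (simp add: measure_translation_subtract)
    also have "\<dots> \<le> measure lebesgue (B S)"
    proof (rule measure_mono_fmeasurable)
      show "(\<lambda>x. x - vtx S) ` (A \<inter> cube (R - 1)) \<subseteq> B S"
      proof (rule image_subsetI)
        fix y assume y: "y \<in> A \<inter> cube (R - 1)"
        have "\<bar>(y - vtx S) $ i\<bar> \<le> R" for i
        proof -
          have "\<bar>y $ i\<bar> \<le> R - 1" using y by (auto simp: cube_def)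
          moreover have "\<bar>vtx S $ i\<bar> \<le> 1" by (auto simp: vtx_def)
          ultimately show ?thesis by simp
        qed
        then show "y - vtx S \<in> B S" using y by (auto simp: B_def cube_def)
      qed
      have "A \<inter> cube (R - 1) \<in> sets lebesgue" using Am cube_lmeas by blast
      then have "(\<lambda>x. - vtx S + x) ` (A \<inter> cube (R - 1)) \<in> sets lebesgue" by (rule lebesgue_sets_translation)
      moreover have "(\<lambda>x. - vtx S + x) ` (A \<inter> cube (R - 1)) = (\<lambda>x. x - vtx S) ` (A \<inter> cube (R - 1))"
        by (auto simp: algebra_simps)
      ultimately show "(\<lambda>x. x - vtx S) ` (A \<inter> cube (R - 1)) \<in> sets lebesgue" by simp
    qed (use Bf in auto)
    finally show ?thesis .
  qed
  have "(\<Sum>S\<in>(UNIV::'n set set). measure lebesgue (A \<inter> cube (R - 1))) \<le> (\<Sum>S\<in>UNIV. measure lebesgue (B S))"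
    by (rule sum_mono) (rule low)
  then have "2 ^ CARD('n) * measure lebesgue (A \<inter> cube (R - 1)) \<le> (\<Sum>S\<in>UNIV. measure lebesgue (B S))"
    by (simp add: card_sets)
  then show ?thesis using sum by linarith
qed

definition A0 :: "(real^'n) set" where "A0 = {x. \<forall>i. even \<lfloor>x $ i\<rfloor>}"

lemma A0_sets: "A0 \<in> sets lebesgue"
proof -
  have "A0 \<in> sets borel" unfolding A0_def by measurable
  then show ?thesis by (metis sets_lborel sets_completionI_sets)
qed

lemma A0_avoids: "avoids_dist1 sup_norm A0"
  unfolding avoids_dist1_def
proof (intro ballI notI)
  fix x y assume x: "x \<in> A0" and y: "y \<in> A0" and d: "sup_norm (x - y) = 1"
  obtain i where "sup_norm (x - y) = \<bar>(x - y) $ i\<bar>" using sup_norm_attained by blast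
  with d have "x $ i = y $ i + 1 \<or> y $ i = x $ i + 1" by auto
  moreover have "even \<lfloor>x $ i\<rfloor>" "even \<lfloor>y $ i\<rfloor>" using x y by (auto simp: A0_def)
  ultimately show False by auto
qed

lemma lower_key:
  assumes R: "R \<ge> 0"
  shows "(2*R) ^ CARD('n) \<le> 2 ^ CARD('n) * measure lebesgue (A0 \<inter> cube (R + 1) :: (real^'n) set)"
proof -
  define C where "C S = (\<lambda>x. x + vtx S) ` (A0 \<inter> cube (R + 1) :: (real^'n) set)" for S
  have Cm: "C S \<in> sets lebesgue" for S
  proof -
    have "A0 \<inter> cube (R + 1) \<in> sets lebesgue" using A0_sets cube_lmeas by blast
    then have "(\<lambda>x. vtx S + x) ` (A0 \<inter> cube (R + 1) :: (real^'n) set) \<in> sets lebesgue"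
      by (rule lebesgue_sets_translation)
    moreover have "(\<lambda>x. vtx S + x) ` (A0 \<inter> cube (R + 1) :: (real^'n) set) = C S"
      by (auto simp: C_def algebra_simps)
    ultimately show ?thesis by simp
  qed
  have Cmeas: "measure lebesgue (C S) = measure lebesgue (A0 \<inter> cube (R + 1) :: (real^'n) set)" for S
  proof -
    have "C S = (+) (vtx S) ` (A0 \<inter> cube (R + 1))" by (auto simp: C_def algebra_simps)
    then show ?thesis by (simp add: measure_translation)
  qed
  have cover: "cube R \<subseteq> (\<Union>S. C S)"
  proof
    fix x :: "real^'n" assume x: "x \<in> cube R"
    define S where "S = {i. odd \<lfloor>x $ i\<rfloor>}"
    have "x - vtx S \<in> A0 \<inter> cube (R + 1)"
    proof -
      have "even \<lfloor>(x - vtx S) $ i\<rfloor> \<and> \<bar>(x - vtx S) $ i\<bar> \<le> R + 1" for i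
      proof -
        have "\<bar>x $ i\<bar> \<le> R" using x by (auto simp: cube_def)
        then show ?thesis by (cases "odd \<lfloor>x $ i\<rfloor>") (auto simp: vtx_def S_def)
      qed
      then show ?thesis by (auto simp: A0_def cube_def)
    qed
    then have "x \<in> C S" unfolding C_def by (rule rev_image_eqI) simp
    then show "x \<in> (\<Union>S. C S)" by blast
  qed
  have "(2*R) ^ CARD('n) = measure lebesgue (cube R :: (real^'n) set)" using R by (simp add: cube_measure)
  also have "\<dots> \<le> measure lebesgue (\<Union>S. C S)"
  proof (rule measure_mono_fmeasurable[OF cover])
    show "cube R \<in> sets lebesgue" using cube_lmeas by blast
    have U: "(\<Union>S. C S) \<in> sets lebesgue" using Cm by (intro sets.countable_UN') auto
    have "(\<Union>S. C S) \<subseteq> cube (R + 2)"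
    proof (clarsimp simp: C_def)
      fix S and y :: "real^'n" assume y: "y \<in> A0" "y \<in> cube (R + 1)"
      have "\<bar>(y + vtx S) $ i\<bar> \<le> R + 2" for i
      proof -
        have "\<bar>y $ i\<bar> \<le> R + 1" using y by (auto simp: cube_def)
        moreover have "\<bar>vtx S $ i\<bar> \<le> 1" by (auto simp: vtx_def)
        ultimately show ?thesis by simp
      qed
      then show "y + vtx S \<in> cube (R + 2)" by (auto simp: cube_def)
    qed
    then show "(\<Union>S. C S) \<in> fmeasurable lebesgue" by (rule fmeasurableI2[OF cube_lmeas _ U])
  qed
  also have "\<dots> \<le> (\<Sum>S\<in>UNIV. measure lebesgue (C S))"
    by (rule measure_UNION_le) (auto intro: Cm)
  also have "\<dots> = 2 ^ CARD('n) * measure lebesgue (A0 \<inter> cube (R + 1) :: (real^'n) set)"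
    by (simp add: Cmeas card_sets)
  finally show ?thesis .
qed


lemma lim_aux: "((\<lambda>R::real. ereal ((1 + c / R) ^ n / 2 ^ n)) \<longlongrightarrow> ereal (1 / 2 ^ n)) at_top"
proof -
  have "((\<lambda>R::real. c / R) \<longlongrightarrow> 0) at_top"
    by (intro tendsto_divide_0[OF tendsto_const] filterlim_at_top_imp_at_infinity[OF filterlim_ident])
  then have "((\<lambda>R::real. (1 + c / R) ^ n / 2 ^ n) \<longlongrightarrow> (1 + 0) ^ n / 2 ^ n) at_top"
    by (intro tendsto_intros) auto
  then show ?thesis by (intro tendsto_ereal) simp
qed

lemma density_upper:
  fixes A :: "(real^'n) set"
  assumes Am: "A \<in> sets lebesgue" and Av: "avoids_dist1 sup_norm A"
  shows "density A \<le> ereal (1 / 2 ^ CARD('n))"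
proof -
  have ev: "eventually (\<lambda>R. ereal (measure lebesgue (A \<inter> cube R) / measure lebesgue (cube R :: (real^'n) set))
      \<le> ereal ((1 + 1 / R) ^ CARD('n) / 2 ^ CARD('n))) at_top"
  proof (rule eventually_mono[OF eventually_gt_at_top[of 0]])
    fix R :: real assume R: "R > 0"
    have "2 ^ CARD('n) * measure lebesgue (A \<inter> cube (R + 1 - 1)) \<le> (2*(R+1)) ^ CARD('n)"
      using upper_key[OF Am Av, of "R+1"] R by simp
    then have "2 ^ CARD('n) * measure lebesgue (A \<inter> cube R) \<le> 2 ^ CARD('n) * (R+1) ^ CARD('n)"
      by (simp only: power_mult_distrib add_diff_cancel_right')
    then have m: "measure lebesgue (A \<inter> cube R) \<le> (R+1) ^ CARD('n)"
      by (rule mult_left_le_imp_le) simp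
    have "measure lebesgue (A \<inter> cube R) / measure lebesgue (cube R :: (real^'n) set)
        = measure lebesgue (A \<inter> cube R) / ((2*R) ^ CARD('n))" using R by (simp add: cube_measure)
    also have "\<dots> \<le> (R+1) ^ CARD('n) / ((2*R) ^ CARD('n))"
      using m R by (intro divide_right_mono) auto
    also have "\<dots> = (1 + 1 / R) ^ CARD('n) / 2 ^ CARD('n)"
    proof -
      have "1 + 1 / R = (R + 1) / R" using R by (simp add: field_simps)
      then show ?thesis by (simp add: power_divide power_mult_distrib)
    qed
    finally show "ereal (measure lebesgue (A \<inter> cube R) / measure lebesgue (cube R :: (real^'n) set))
      \<le> ereal ((1 + 1 / R) ^ CARD('n) / 2 ^ CARD('n))" by simp
  qed
  have "density A \<le> Limsup at_top (\<lambda>R::real. ereal ((1 + 1 / R) ^ CARD('n) / 2 ^ CARD('n)))"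
    unfolding density_def by (rule Limsup_mono[OF ev])
  also have "\<dots> = ereal (1 / 2 ^ CARD('n))"
    by (rule lim_imp_Limsup[OF trivial_limit_at_top_linorder lim_aux])
  finally show ?thesis .
qed

lemma density_A0: "density (A0 :: (real^'n) set) \<ge> ereal (1 / 2 ^ CARD('n))"
proof -
  have ev: "eventually (\<lambda>R. ereal ((1 + (-1) / R) ^ CARD('n) / 2 ^ CARD('n)) \<le>
      ereal (measure lebesgue (A0 \<inter> cube R :: (real^'n) set) / measure lebesgue (cube R :: (real^'n) set))) at_top"
  proof (rule eventually_mono[OF eventually_ge_at_top[of 1]])
    fix R :: real assume R: "R \<ge> 1"
    have "(2*(R-1)) ^ CARD('n) \<le> 2 ^ CARD('n) * measure lebesgue (A0 \<inter> cube (R - 1 + 1) :: (real^'n) set)"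
      using lower_key[of "R - 1"] R by simp
    then have "2 ^ CARD('n) * (R-1) ^ CARD('n) \<le> 2 ^ CARD('n) * measure lebesgue (A0 \<inter> cube R :: (real^'n) set)"
      by (simp only: power_mult_distrib diff_add_cancel)
    then have m: "(R-1) ^ CARD('n) \<le> measure lebesgue (A0 \<inter> cube R :: (real^'n) set)"
      by (rule mult_left_le_imp_le) simp
    have "(1 + (-1) / R) ^ CARD('n) / 2 ^ CARD('n) = (R-1) ^ CARD('n) / ((2*R) ^ CARD('n))"
    proof -
      have "1 + (-1) / R = (R - 1) / R" using R by (simp add: field_simps)
      then show ?thesis by (simp add: power_divide power_mult_distrib)
    qed
    also have "\<dots> \<le> measure lebesgue (A0 \<inter> cube R :: (real^'n) set) / ((2*R) ^ CARD('n))"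
      using m R by (intro divide_right_mono) auto
    also have "\<dots> = measure lebesgue (A0 \<inter> cube R :: (real^'n) set) / measure lebesgue (cube R :: (real^'n) set)"
      using R by (simp add: cube_measure)
    finally show "ereal ((1 + (-1) / R) ^ CARD('n) / 2 ^ CARD('n)) \<le>
      ereal (measure lebesgue (A0 \<inter> cube R :: (real^'n) set) / measure lebesgue (cube R :: (real^'n) set))" by simp
  qed
  have "ereal (1 / 2 ^ CARD('n)) = Liminf at_top (\<lambda>R::real. ereal ((1 + (-1) / R) ^ CARD('n) / 2 ^ CARD('n)))"
    by (rule lim_imp_Liminf[OF trivial_limit_at_top_linorder lim_aux, symmetric])
  also have "\<dots> \<le> Liminf at_top (\<lambda>R. ereal (measure lebesgue (A0 \<inter> cube R :: (real^'n) set) / measure lebesgue (cube R :: (real^'n) set)))"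
    by (rule Liminf_mono[OF ev])
  also have "\<dots> \<le> density (A0 :: (real^'n) set)"
    unfolding density_def by (rule Liminf_le_Limsup[OF trivial_limit_at_top_linorder])
  finally show ?thesis .
qed

theorem proposition2:
  shows "m1 (sup_norm :: real^'n \<Rightarrow> real) = ereal (1 / 2 ^ CARD('n))"
  unfolding m1_def
proof (rule antisym)
  show "Sup {density A | A. A \<in> sets lebesgue \<and> avoids_dist1 (sup_norm :: real^'n \<Rightarrow> real) A} \<le> ereal (1 / 2 ^ CARD('n))"
    by (rule Sup_least) (auto intro: density_upper)
  have "density (A0 :: (real^'n) set) \<le> Sup {density A | A. A \<in> sets lebesgue \<and> avoids_dist1 (sup_norm :: real^'n \<Rightarrow> real) A}"
    by (rule Sup_upper) (use A0_sets A0_avoids in blast)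
  then show "ereal (1 / 2 ^ CARD('n)) \<le> Sup {density A | A. A \<in> sets lebesgue \<and> avoids_dist1 (sup_norm :: real^'n \<Rightarrow> real) A}"
    using density_A0 by (rule order_trans[rotated])
qed

end
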